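(* Let $F$ be an algebraically closed field of positive characteristic $p$. A rational function $\phi \in F(z)$ has no finite critical point if and only if its continued fraction expansion has the form \[ \phi(z) = [q_0(z^p), q_1(z^p), \ldots, q_n(z^p) + az] \] for some integer $n \geq 0$, polynomials $q_0, q_1, \ldots, q_n \in F[z]$, and a nonzero element $a \in F$.
   Context: Continued fraction expansion: for $\phi \in F(z)$, repeated use of the division algorithm gives unique polynomials $f_0, \ldots, f_n \in F[z]$, with $f_1, \ldots, f_n$ nonconstant ($f_0$ may be constant or zero), such that $\phi = f_0 + \cfrac{1}{f_1 + \cfrac{1}{\ddots + \cfrac{1}{f_n}}}$; this is written $\phi = [f_0, f_1, \ldots, f_n]$. Critical points: for $x \in F$, choose a fractional linear transformation $\sigma$ with coefficients in $F$ such that $\sigma(\phi(x)) \neq \infty$; $x$ is a finite critical point of $\phi$ if $\frac{d(\sigma\circ\phi)}{dz}(x) = 0$ (this is independent of the choice of $\sigma$). The point $\infty$ is a critical point if $\frac{d(\sigma \circ \phi(1/z))}{dz}\big|_{z=0} = 0$ for such a $\sigma$ with $\sigma(\phi(\infty)) \neq \infty$. *)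

theory Defs
  imports "HOL-Computational_Algebra.Computational_Algebra"
begin

text \<open>Rational functions in F(z) are elements of the fraction field of F[z].
  Numerator/denominator are taken in reduced (normalized) form.\<close>

definition rnum :: "'a::field_gcd poly fract \<Rightarrow> 'a poly" where
  "rnum \<phi> = fst (quot_of_fract \<phi>)"

definition rden :: "'a::field_gcd poly fract \<Rightarrow> 'a poly" where
  "rden \<phi> = snd (quot_of_fract \<phi>)"

text \<open>Value of a rational function at a point of F, as an element of the
  projective line F \<union> {\<infinity>}; None stands for \<infinity>.\<close>
definition rval :: "'a::field_gcd poly fract \<Rightarrow> 'a \<Rightarrow> 'a option" where
  "rval \<phi> x = (if poly (rden \<phi>) x \<noteq> 0
                then Some (poly (rnum \<phi>) x / poly (rden \<phi>) x) else None)"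

definition rderiv :: "'a::field_gcd poly fract \<Rightarrow> 'a poly fract" where
  "rderiv \<phi> = Fract (pderiv (rnum \<phi>) * rden \<phi> - rnum \<phi> * pderiv (rden \<phi>))
                      (rden \<phi> ^ 2)"

definition flt_ok :: "'a::field_gcd \<Rightarrow> 'a \<Rightarrow> 'a \<Rightarrow> 'a \<Rightarrow> bool" where
  "flt_ok a b c d \<longleftrightarrow> a * d - b * c \<noteq> 0"

definition flt_apply :: "'a::field_gcd \<Rightarrow> 'a \<Rightarrow> 'a \<Rightarrow> 'a \<Rightarrow> 'a option \<Rightarrow> 'a option" where
  "flt_apply a b c d w = (case w of
      Some v \<Rightarrow> (if c * v + d \<noteq> 0 then Some ((a * v + b) / (c * v + d)) else None)
    | None \<Rightarrow> (if c \<noteq> 0 then Some (a / c) else None))"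

definition flt_comp :: "'a::field_gcd \<Rightarrow> 'a \<Rightarrow> 'a \<Rightarrow> 'a \<Rightarrow> 'a poly fract \<Rightarrow> 'a poly fract" where
  "flt_comp a b c d \<phi> =
     (to_fract [:a:] * \<phi> + to_fract [:b:]) / (to_fract [:c:] * \<phi> + to_fract [:d:])"

text \<open>x \<in> F is a finite critical point of \<phi>: for a fractional linear
  transformation \<sigma> with \<sigma>(\<phi>(x)) \<noteq> \<infinity>, the derivative of \<sigma> \<circ> \<phi> vanishes at x
  (independent of the choice of \<sigma>).\<close>
definition finite_critical_point :: "'a::field_gcd poly fract \<Rightarrow> 'a \<Rightarrow> bool" where
  "finite_critical_point \<phi> x \<longleftrightarrow>
     (\<exists>a b c d. flt_ok a b c d \<and> flt_apply a b c d (rval \<phi> x) \<noteq> None \<and>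
        rval (rderiv (flt_comp a b c d \<phi>)) x = Some 0)"

fun cfrac :: "'a::field_gcd poly list \<Rightarrow> 'a poly fract" where
  "cfrac [] = 0"
| "cfrac [f] = to_fract f"
| "cfrac (f # fs) = to_fract f + inverse (cfrac fs)"

text \<open>fs is a continued fraction expansion of \<phi>: nonempty, all entries after
  the first nonconstant, and it evaluates to \<phi> (such an expansion is unique).\<close>
definition is_cf_expansion :: "'a::field_gcd poly fract \<Rightarrow> 'a poly list \<Rightarrow> bool" where
  "is_cf_expansion \<phi> fs \<longleftrightarrow>
     fs \<noteq> [] \<and> (\<forall>i\<in>{1..<length fs}. degree (fs ! i) \<ge> 1) \<and> cfrac fs = \<phi>"

end

theory Submission
  imports Defs
begin


definition wr :: "'a::field poly \<Rightarrow> 'a poly \<Rightarrow> 'a poly" where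
  "wr A B = pderiv A * B - A * pderiv B"

lemma wr_welldef:
  fixes A B a b :: "'a::field poly"
  assumes E: "a * B = A * b"
  shows "wr a b * B^2 = wr A B * b^2"
proof -
  have E': "pderiv a * B + a * pderiv B = pderiv A * b + A * pderiv b"
    using arg_cong[OF E, of pderiv] by (simp add: pderiv_mult mult.commute)
  have "wr a b * B^2 - wr A B * b^2
     = (b*B) * (pderiv a * B + a * pderiv B - (pderiv A * b + A * pderiv b))
       - (b * pderiv B + pderiv b * B) * (a * B - A * b)"
    by (simp add: wr_def power2_eq_square algebra_simps)
  also have "\<dots> = 0" using E E' by simp
  finally show ?thesis by simp
qed

lemma rderiv_Fract:
  fixes A B :: "'a::field_gcd poly"
  assumes "B \<noteq> 0"
  shows "rderiv (Fract A B) = Fract (wr A B) (B^2)"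
proof -
  let ?a = "rnum (Fract A B)" and ?b = "rden (Fract A B)"
  have b0: "?b \<noteq> 0" by (simp add: rden_def)
  have "Fract ?a ?b = Fract A B" by (simp add: rnum_def rden_def)
  hence E: "?a * B = A * ?b" using assms b0 by (simp add: eq_fract)
  show ?thesis unfolding rderiv_def using wr_welldef[OF E] assms b0
    by (simp add: eq_fract wr_def[symmetric])
qed

lemma rval_Fract:
  fixes A B :: "'a::field_gcd poly"
  assumes "B \<noteq> 0" "poly B x \<noteq> 0"
  shows "rval (Fract A B) x = Some (poly A x / poly B x)"
proof -
  let ?a = "rnum (Fract A B)" and ?b = "rden (Fract A B)"
  have b0: "?b \<noteq> 0" by (simp add: rden_def)
  have "Fract ?a ?b = Fract A B" by (simp add: rnum_def rden_def)
  hence E: "?a * B = A * ?b" using assms b0 by (simp add: eq_fract)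
  have cop: "coprime ?b ?a" using coprime_quot_of_fract[of "Fract A B"]
    by (simp add: rnum_def rden_def coprime_commute)
  have "?b dvd ?a * B" using E by simp
  hence "?b dvd B" using cop by (simp add: coprime_dvd_mult_right_iff)
  hence pb: "poly ?b x \<noteq> 0" using assms(2) by (metis dvd_def mult_zero_left poly_mult)
  have "poly ?a x * poly B x = poly A x * poly ?b x" using arg_cong[OF E, of "\<lambda>p. poly p x"] by simp
  thus ?thesis using pb assms unfolding rval_def by (simp add: field_simps)
qed

lemma flt_comp_Fract:
  fixes f g :: "'a::field_gcd poly"
  assumes "g \<noteq> 0"
  shows "flt_comp a b c d (Fract f g) = Fract (smult a f + smult b g) (smult c f + smult d g)"
proof -
  have N: "to_fract [:a:] * Fract f g + to_fract [:b:] = Fract (smult a f + smult b g) g"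
    using assms by (simp add: to_fract_def eq_fract algebra_simps)
  have D: "to_fract [:c:] * Fract f g + to_fract [:d:] = Fract (smult c f + smult d g) g"
    using assms by (simp add: to_fract_def eq_fract algebra_simps)
  show ?thesis
  proof (cases "smult c f + smult d g = 0")
    case True
    have "Fract (smult a f + smult b g) (smult c f + smult d g) = 0" using True by (simp add: eq_fract Zero_fract_def)
    moreover have "flt_comp a b c d (Fract f g) = 0" unfolding flt_comp_def N D True by (simp add: eq_fract Zero_fract_def)
    ultimately show ?thesis by simp
  next
    case False
    have "smult c (f * g) + smult d (g * g) = (smult c f + smult d g) * g" by (simp add: algebra_simps)
    hence "smult c (f * g) + smult d (g * g) \<noteq> 0" using False assms by simp
    thus ?thesis using False assms unfolding flt_comp_def N D by (simp add: eq_fract algebra_simps)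
  qed
qed

lemma wr_lin:
  fixes f g :: "'a::field poly"
  shows "wr (smult a f + smult b g) (smult c f + smult d g) = smult (a*d - b*c) (wr f g)"
  by (simp add: wr_def pderiv_add pderiv_smult algebra_simps smult_diff_left smult_diff_right)

lemma coprime_no_common_root:
  fixes f g :: "'a::field_gcd poly"
  assumes "coprime f g" "poly g x = 0" "poly f x = 0"
  shows False
proof -
  have "[:-x,1:] dvd f" "[:-x,1:] dvd g" using assms by (simp_all add: poly_eq_0_iff_dvd)
  hence "is_unit [:-x,1:]" using assms(1) coprime_common_divisor by blast
  thus False by (simp add: is_unit_iff_degree)
qed

lemma phi_Fract: "Fract (rnum \<phi>) (rden \<phi>) = \<phi>"
  by (simp add: rnum_def rden_def)

lemma rden_nz: "rden \<phi> \<noteq> 0"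
  by (simp add: rden_def)

lemma coprime_rnum_rden: "coprime (rnum \<phi>) (rden \<phi>)"
  using coprime_quot_of_fract by (simp add: rnum_def rden_def)

lemma wr_swap: "wr g f = - wr f g"
  by (simp add: wr_def algebra_simps)

lemma aux_field: "(u::'a::field) \<noteq> 0 \<Longrightarrow> u * (c * (v / u) + d) = c * v + d * u"
  by (simp add: field_simps)

lemma fcp_root:
  fixes \<phi> :: "'a::field_gcd poly fract"
  assumes "finite_critical_point \<phi> x"
  shows "poly (wr (rnum \<phi>) (rden \<phi>)) x = 0"
proof -
  let ?f = "rnum \<phi>" and ?g = "rden \<phi>"
  obtain a b c d where ok: "flt_ok a b c d" and ap: "flt_apply a b c d (rval \<phi> x) \<noteq> None"
    and rv: "rval (rderiv (flt_comp a b c d \<phi>)) x = Some 0"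
    using assms unfolding finite_critical_point_def by blast
  have g0: "?g \<noteq> 0" by (rule rden_nz)
  have k0: "a * d - b * c \<noteq> 0" using ok by (simp add: flt_ok_def)
  show ?thesis
  proof (cases "smult c ?f + smult d ?g = 0")
    case True
    have c0: "c \<noteq> 0"
    proof
      assume "c = 0"
      hence "smult d ?g = 0" using True by simp
      hence "d = 0" using g0 by simp
      thus False using k0 \<open>c = 0\<close> by simp
    qed
    have "smult c ?f = smult (- d) ?g" using True by (simp add: eq_neg_iff_add_eq_0)
    hence "smult (inverse c) (smult c ?f) = smult (inverse c) (smult (- d) ?g)" by simp
    hence "?f = smult (- d / c) ?g" using c0 by (simp add: divide_inverse mult.commute)
    hence "wr ?f ?g = 0" by (simp add: wr_def pderiv_smult pderiv_minus mult.commute)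
    thus ?thesis by simp
  next
    case False
    let ?D = "smult c ?f + smult d ?g"
    have phi: "\<phi> = Fract ?f ?g" by (simp add: phi_Fract)
    have fc: "flt_comp a b c d \<phi> = Fract (smult a ?f + smult b ?g) ?D"
      using flt_comp_Fract[OF g0] phi by metis
    have rd: "rderiv (flt_comp a b c d \<phi>) = Fract (smult (a*d - b*c) (wr ?f ?g)) (?D^2)"
      unfolding fc using False by (simp add: rderiv_Fract wr_lin)
    have Dx: "poly ?D x \<noteq> 0"
    proof (cases "poly ?g x = 0")
      case False
      have "rval \<phi> x = Some (poly ?f x / poly ?g x)" using False by (simp add: rval_def)
      hence "c * (poly ?f x / poly ?g x) + d \<noteq> 0" using ap by (auto simp: flt_apply_def split: if_splits)
      hence "poly ?g x * (c * (poly ?f x / poly ?g x) + d) \<noteq> 0" using False by simp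
      moreover have "poly ?g x * (c * (poly ?f x / poly ?g x) + d) = c * poly ?f x + d * poly ?g x"
        using False by (rule aux_field)
      ultimately have "c * poly ?f x + d * poly ?g x \<noteq> 0" by metis
      thus ?thesis by simp
    next
      case True
      have "rval \<phi> x = None" using True by (simp add: rval_def)
      hence "c \<noteq> 0" using ap by (auto simp: flt_apply_def split: if_splits)
      moreover have "poly ?f x \<noteq> 0" using coprime_no_common_root[OF coprime_rnum_rden] True by blast
      ultimately show ?thesis using True by simp
    qed
    have "rval (rderiv (flt_comp a b c d \<phi>)) x
        = Some (poly (smult (a*d - b*c) (wr ?f ?g)) x / (poly ?D x)^2)"
      unfolding rd using False Dx by (subst rval_Fract) (simp_all add: poly_power)
    with rv Dx k0 show ?thesis by simp
  qed
qed

lemma root_fcp: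
  fixes \<phi> :: "'a::field_gcd poly fract"
  assumes "poly (wr (rnum \<phi>) (rden \<phi>)) x = 0"
  shows "finite_critical_point \<phi> x"
proof -
  let ?f = "rnum \<phi>" and ?g = "rden \<phi>"
  have g0: "?g \<noteq> 0" by (rule rden_nz)
  have phi: "\<phi> = Fract ?f ?g" by (simp add: phi_Fract)
  show ?thesis
  proof (cases "poly ?g x = 0")
    case False
    have fc: "flt_comp 1 0 0 1 \<phi> = Fract ?f ?g"
      using flt_comp_Fract[OF g0, of 1 0 0 1 ?f] phi by simp
    have "rval (rderiv (flt_comp 1 0 0 1 \<phi>)) x = Some 0"
      unfolding fc using g0 False assms by (simp add: rderiv_Fract rval_Fract poly_power)
    moreover have "flt_apply 1 0 0 1 (rval \<phi> x) \<noteq> None"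
      using False by (simp add: rval_def flt_apply_def)
    moreover have "flt_ok (1::'a) 0 0 1" by (simp add: flt_ok_def)
    ultimately show ?thesis unfolding finite_critical_point_def by blast
  next
    case True
    have fx: "poly ?f x \<noteq> 0" using coprime_no_common_root[OF coprime_rnum_rden] True by blast
    hence f0: "?f \<noteq> 0" by auto
    have fc: "flt_comp 0 1 1 0 \<phi> = Fract ?g ?f"
      using flt_comp_Fract[OF g0, of 0 1 1 0 ?f] phi by simp
    have "rval (rderiv (flt_comp 0 1 1 0 \<phi>)) x = Some 0"
      unfolding fc using f0 fx assms by (simp add: rderiv_Fract rval_Fract poly_power wr_swap[of ?g ?f])
    moreover have "flt_apply 0 1 1 0 (rval \<phi> x) \<noteq> None"
      using True by (simp add: rval_def flt_apply_def)
    moreover have "flt_ok (0::'a) 1 1 0" by (simp add: flt_ok_def)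
    ultimately show ?thesis unfolding finite_critical_point_def by blast
  qed
qed

lemma crit_iff:
  fixes \<phi> :: "'a::field_gcd poly fract"
  assumes alg_closed: "\<And>f :: 'a poly. degree f \<ge> 1 \<Longrightarrow> \<exists>x. poly f x = 0"
  shows "(\<nexists>x. finite_critical_point \<phi> x) \<longleftrightarrow>
         (wr (rnum \<phi>) (rden \<phi>) \<noteq> 0 \<and> degree (wr (rnum \<phi>) (rden \<phi>)) = 0)"
proof -
  let ?W = "wr (rnum \<phi>) (rden \<phi>)"
  have "(\<nexists>x. finite_critical_point \<phi> x) \<longleftrightarrow> (\<nexists>x. poly ?W x = 0)"
    using fcp_root root_fcp by blast
  also have "\<dots> \<longleftrightarrow> (?W \<noteq> 0 \<and> degree ?W = 0)"
  proof
    assume "\<nexists>x. poly ?W x = 0"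
    hence "?W \<noteq> 0" by (metis poly_0)
    moreover have "\<not> degree ?W \<ge> 1" using alg_closed[of ?W] \<open>\<nexists>x. poly ?W x = 0\<close> by blast
    ultimately show "?W \<noteq> 0 \<and> degree ?W = 0" by simp
  next
    assume "?W \<noteq> 0 \<and> degree ?W = 0"
    hence e: "?W = [:coeff ?W 0:]" using degree_0_id[of ?W] by simp
    hence "coeff ?W 0 \<noteq> 0" using \<open>?W \<noteq> 0 \<and> degree ?W = 0\<close> by (metis pCons_0_0)
    note e this
    thus "\<nexists>x. poly ?W x = 0" by (metis poly_const_conv)
  qed
  finally show ?thesis .
qed



lemma pcompose_monom_gen: "pcompose (monom c i) r = smult c (r ^ i)"
  by (induction i) (simp_all add: monom_Suc pcompose_pCons monom_0)

lemma pcompose_monom_p: "pcompose (monom c i) (monom (1::'a::comm_ring_1) p) = monom c (i * p)"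
  by (simp add: pcompose_monom_gen monom_power smult_monom mult.commute)

lemma pderiv_pcompose_char:
  fixes q :: "'a::field poly"
  shows "pderiv (pcompose q (monom 1 CHAR('a))) = 0"
  by (simp add: pderiv_pcompose pderiv_monom)

lemma pderiv_zero_char:
  fixes s :: "'a::field poly"
  assumes "pderiv s = 0" "CHAR('a) > 0"
  shows "\<exists>q. s = pcompose q (monom 1 CHAR('a))"
proof -
  let ?p = "CHAR('a)"
  let ?q = "\<Sum>i\<le>degree s. monom (coeff s (i * ?p)) i"
  have "pcompose ?q (monom 1 ?p) = (\<Sum>i\<le>degree s. monom (coeff s (i * ?p)) (i * ?p))"
    by (simp add: pcompose_sum pcompose_monom_p)
  also have "\<dots> = s"
  proof (rule poly_eqI)
    fix j
    have "coeff (\<Sum>i\<le>degree s. monom (coeff s (i * ?p)) (i * ?p)) j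
        = (\<Sum>i\<le>degree s. if i = j div ?p \<and> ?p dvd j then coeff s j else 0)"
      unfolding coeff_sum by (intro sum.cong refl) (auto simp: assms(2))
    also have "\<dots> = coeff s j"
    proof (cases "?p dvd j")
      case True
      then obtain m where m: "j = m * ?p" by (metis dvd_def mult.commute)
      have jd: "j div ?p = m" using m assms(2) by simp
      have "(\<Sum>i\<le>degree s. if i = j div ?p \<and> ?p dvd j then coeff s j else 0)
          = (\<Sum>i\<le>degree s. if i = m then coeff s j else 0)"
        using True jd by simp
      also have "\<dots> = (if m \<le> degree s then coeff s j else 0)"
        by (simp add: sum.delta')
      also have "\<dots> = coeff s j"
      proof (cases "m \<le> degree s")
        case False
        have "m \<le> j" using m assms(2) by simp
        hence "j > degree s" using False by simp
        thus ?thesis by (simp add: coeff_eq_0)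
      qed simp
      finally show ?thesis .
    next
      case False
      have j0: "j \<noteq> 0" using False by (metis dvd_0_right)
      have "coeff (pderiv s) (j - 1) = 0" using assms(1) by simp
      hence "of_nat j * coeff s j = 0" using j0 by (cases j) (simp_all add: coeff_pderiv)
      moreover have "(of_nat j :: 'a) \<noteq> 0" using False by (simp add: of_nat_eq_0_iff_char_dvd)
      ultimately have "coeff s j = 0" by simp
      thus ?thesis using False by simp
    qed
    finally show "coeff (\<Sum>i\<le>degree s. monom (coeff s (i * ?p)) (i * ?p)) j = coeff s j" .
  qed
  finally show ?thesis by metis
qed



lemma degree_pderiv_le: "degree (pderiv (x::'a::field poly)) \<le> degree x"
  by (rule degree_le) (simp add: coeff_pderiv coeff_eq_0)

definition mk :: "nat \<Rightarrow> nat \<Rightarrow> 'a::field_gcd poly list \<Rightarrow> 'a \<Rightarrow> 'a poly list" where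
  "mk p n qs a = map (\<lambda>i. if i = n then pcompose (qs ! i) (monom 1 p) + [:0, a:]
                        else pcompose (qs ! i) (monom 1 p)) [0..<n + 1]"

lemma mk_0: "mk p 0 qs a = [pcompose (qs ! 0) (monom 1 p) + [:0, a:]]"
  by (simp add: mk_def)

lemma mk_Suc: "mk p (Suc n) (q # qs) a = pcompose q (monom 1 p) # mk p n qs a"
  unfolding mk_def Suc_eq_plus1[symmetric] map_upt_Suc by simp

lemma mk_ne: "mk p n qs a \<noteq> []"
  by (simp add: mk_def)

lemma wr_step: "wr (s * P + Q) P = pderiv s * P^2 - wr P Q"
  by (simp add: wr_def pderiv_add pderiv_mult power2_eq_square algebra_simps)

lemma cf_wr:
  fixes qs :: "'a::field_gcd poly list"
  assumes "length qs = n + 1" "a \<noteq> 0"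
  shows "\<exists>P Q. Q \<noteq> 0 \<and> cfrac (mk CHAR('a) n qs a) = Fract P Q \<and> wr P Q \<noteq> 0 \<and> degree (wr P Q) = 0"
  using assms
proof (induction n arbitrary: qs)
  case 0
  then obtain q where qs: "qs = [q]" by (cases qs) auto
  let ?f = "pcompose q (monom 1 CHAR('a)) + [:0, a:]"
  have "wr ?f 1 = [:a:]" by (simp add: wr_def pderiv_add pderiv_pcompose_char pderiv_pCons)
  thus ?case using 0 qs by (intro exI[of _ ?f] exI[of _ 1]) (simp add: mk_0 to_fract_def)
next
  case (Suc n)
  then obtain q qs' where qs: "qs = q # qs'" and l: "length qs' = n + 1" by (cases qs) auto
  obtain P Q where Q0: "Q \<noteq> 0" and cf: "cfrac (mk CHAR('a) n qs' a) = Fract P Q"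
    and w: "wr P Q \<noteq> 0" "degree (wr P Q) = 0"
    using Suc.IH[OF l Suc.prems(2)] by blast
  have P0: "P \<noteq> 0" using w by (auto simp: wr_def)
  let ?s = "pcompose q (monom 1 CHAR('a))"
  obtain x xs where L: "mk CHAR('a) n qs' a = x # xs" using mk_ne by (metis list.exhaust)
  have "cfrac (mk CHAR('a) (Suc n) qs a) = to_fract ?s + inverse (Fract P Q)"
    unfolding qs mk_Suc L by (simp add: cf[unfolded L])
  also have "\<dots> = Fract (?s * P + Q) P" using P0 Q0 by (simp add: to_fract_def)
  finally have "cfrac (mk CHAR('a) (Suc n) qs a) = Fract (?s * P + Q) P" .
  moreover have "wr (?s * P + Q) P = - wr P Q"
    by (simp add: wr_step pderiv_pcompose_char)
  ultimately show ?case using P0 w by (intro exI[of _ "?s * P + Q"] exI[of _ P]) simp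
qed

lemma reduced_good:
  fixes f g P Q :: "'a::field_gcd poly"
  assumes "Fract f g = Fract P Q" "g \<noteq> 0" "Q \<noteq> 0" "coprime f g"
    "wr P Q \<noteq> 0" "degree (wr P Q) = 0"
  shows "wr f g \<noteq> 0 \<and> degree (wr f g) = 0"
proof -
  have E: "f * Q = P * g" using assms(1-3) by (simp add: eq_fract)
  have W: "wr f g * Q^2 = wr P Q * g^2" by (rule wr_welldef[OF E])
  have "g dvd f * Q" using E by simp
  hence "g dvd Q" using assms(4) by (simp add: coprime_commute coprime_dvd_mult_right_iff)
  then obtain h where h: "Q = g * h" by (auto simp: dvd_def)
  have h0: "h \<noteq> 0" using h assms(3) by auto
  have "(wr f g * h^2) * g^2 = wr P Q * g^2" using W h by (simp add: power_mult_distrib algebra_simps)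
  hence W2: "wr f g * h^2 = wr P Q" using assms(2) by simp
  hence nz: "wr f g \<noteq> 0" using assms(5) by auto
  have "degree (wr f g * h^2) = degree (wr f g) + degree (h^2)"
    using nz h0 by (intro degree_mult_eq) simp_all
  with W2 assms(6) nz show ?thesis by simp
qed

lemma wr_const: "wr P [:c:] = smult c (pderiv P)"
  by (simp add: wr_def)

lemma build:
  fixes P Q :: "'a::field_gcd poly"
  assumes char: "CHAR('a) > 0"
  shows "Q \<noteq> 0 \<Longrightarrow> wr P Q \<noteq> 0 \<Longrightarrow> degree (wr P Q) = 0 \<Longrightarrow>
    \<exists>n qs a. length qs = n + 1 \<and> a \<noteq> 0 \<and> cfrac (mk CHAR('a) n qs a) = Fract P Q \<and>
      (\<forall>i\<in>{1..<n+1}. degree (mk CHAR('a) n qs a ! i) \<ge> 1) \<and>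
      (degree Q < degree P \<longrightarrow> degree (hd (mk CHAR('a) n qs a)) \<ge> 1)"
proof (induction "degree Q" arbitrary: P Q rule: less_induct)
  case less
  let ?M = "monom 1 CHAR('a) :: 'a poly"
  show ?case
  proof (cases "degree Q = 0")
    case True
    then obtain c where Qc: "Q = [:c:]" by (metis degree_0_id)
    have c0: "c \<noteq> 0" using less.prems(1) Qc by simp
    define P1 where "P1 = smult (inverse c) P"
    have wc: "wr P Q = smult c (pderiv P)" unfolding Qc by (rule wr_const)
    have "pderiv P1 = smult (inverse c) (pderiv P)" unfolding P1_def by (simp add: pderiv_smult)
    hence w1: "pderiv P1 \<noteq> 0" "degree (pderiv P1) = 0" using less.prems c0 wc
      by simp_all
    then obtain k where k: "pderiv P1 = [:k:]" "k \<noteq> 0" by (metis degree_0_id pCons_0_0)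
    have "pderiv (P1 - [:0, k:]) = 0" using k by (simp add: pderiv_diff pderiv_pCons)
    then obtain q where q: "P1 - [:0, k:] = pcompose q ?M" using pderiv_zero_char[OF _ char] by blast
    have mk: "mk CHAR('a) 0 [q] k = [P1]" using q by (simp add: mk_0 algebra_simps)
    have "cfrac [P1] = Fract P Q" using c0 Qc
      by (simp add: to_fract_def eq_fract P1_def)
    moreover have "degree P1 = degree P" using c0 by (simp add: P1_def)
    ultimately show ?thesis using k(2) True mk
      by (intro exI[of _ 0] exI[of _ "[q]"] exI[of _ k]) simp
  next
    case False
    define s where "s = P div Q"
    define R where "R = P mod Q"
    have PsQR: "P = s * Q + R" unfolding s_def R_def by simp
    have wrP: "wr P Q = pderiv s * Q^2 - wr Q R" unfolding PsQR by (rule wr_step)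
    have Rlt: "R = 0 \<or> degree R < degree Q" unfolding R_def using degree_mod_less[OF less.prems(1)] by simp
    have s0: "pderiv s = 0"
    proof (rule ccontr)
      assume ns: "pderiv s \<noteq> 0"
      have d1: "degree (pderiv s * Q^2) \<ge> 2 * degree Q"
        using ns less.prems(1) by (simp add: degree_mult_eq degree_power_eq)
      have d2: "degree (wr Q R) < 2 * degree Q"
      proof (cases "R = 0")
        case True thus ?thesis using False by (simp add: wr_def)
      next
        case Rn: False
        hence dR: "degree R < degree Q" using Rlt by simp
        have a: "degree (pderiv Q * R) < 2 * degree Q"
          using degree_mult_le[of "pderiv Q" R] degree_pderiv_le[of Q] dR by linarith
        have b: "degree (Q * pderiv R) < 2 * degree Q"
          using degree_mult_le[of Q "pderiv R"] degree_pderiv_le[of R] dR by linarith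
        show ?thesis unfolding wr_def using degree_diff_le_max[of "pderiv Q * R" "Q * pderiv R"] a b
          by linarith
      qed
      have "pderiv s * Q^2 = wr P Q + wr Q R" using wrP by simp
      hence "degree (pderiv s * Q^2) \<le> max (degree (wr P Q)) (degree (wr Q R))"
        by (metis degree_add_le_max)
      thus False using less.prems(3) d1 d2 False by simp
    qed
    have wQR: "wr Q R = - wr P Q" using wrP s0 by simp
    have R0: "R \<noteq> 0" using wQR less.prems(2) by (auto simp: wr_def)
    have dR: "degree R < degree Q" using Rlt R0 by simp
    obtain n qs a where IH: "length qs = n + 1" "a \<noteq> 0" "cfrac (mk CHAR('a) n qs a) = Fract Q R"
      "\<forall>i\<in>{1..<n+1}. degree (mk CHAR('a) n qs a ! i) \<ge> 1"
      "degree R < degree Q \<longrightarrow> degree (hd (mk CHAR('a) n qs a)) \<ge> 1"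
    proof -
      have "wr Q R \<noteq> 0" "degree (wr Q R) = 0" using wQR less.prems(2,3) by simp_all
      from less.hyps[OF dR R0 this] show ?thesis using that by blast
    qed
    obtain q where q: "s = pcompose q ?M" using pderiv_zero_char[OF s0 char] by blast
    obtain x xs where L: "mk CHAR('a) n qs a = x # xs" using mk_ne by (metis list.exhaust)
    have hx: "degree x \<ge> 1" using IH(5) dR L by simp
    have mkS: "mk CHAR('a) (Suc n) (q # qs) a = s # x # xs" by (simp add: mk_Suc L q)
    have "cfrac (s # x # xs) = to_fract s + inverse (Fract Q R)" using IH(3) L by simp
    also have "\<dots> = Fract P Q" using R0 less.prems(1) by (simp add: to_fract_def eq_fract PsQR algebra_simps)
    finally have cf: "cfrac (mk CHAR('a) (Suc n) (q # qs) a) = Fract P Q" using mkS by simp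
    have degs: "\<forall>i\<in>{1..<Suc n+1}. degree (mk CHAR('a) (Suc n) (q # qs) a ! i) \<ge> 1"
    proof
      fix i assume i: "i \<in> {1..<Suc n+1}"
      show "degree (mk CHAR('a) (Suc n) (q # qs) a ! i) \<ge> 1"
      proof (cases "i = 1")
        case True thus ?thesis using mkS hx by simp
      next
        case False
        hence "i - 1 \<in> {1..<n+1}" using i by auto
        hence "degree ((x # xs) ! (i - 1)) \<ge> 1" using IH(4) L by metis
        moreover have "(s # x # xs) ! i = (x # xs) ! (i - 1)" using i by (cases i) auto
        ultimately show ?thesis using mkS by simp
      qed
    qed
    have hd: "degree Q < degree P \<longrightarrow> degree s \<ge> 1"
    proof
      assume lt: "degree Q < degree P"
      show "degree s \<ge> 1"
      proof (rule ccontr)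
        assume "\<not> degree s \<ge> 1"
        hence "degree (s * Q) \<le> degree Q" using degree_mult_le[of s Q] by linarith
        hence "degree P \<le> degree Q" unfolding PsQR using degree_add_le[of "s*Q" "degree Q" R] dR by linarith
        thus False using lt by simp
      qed
    qed
    show ?thesis using IH(1,2) cf degs hd mkS
      by (intro exI[of _ "Suc n"] exI[of _ "q # qs"] exI[of _ a]) simp
  qed
qed


theorem theorem1p1:
  fixes \<phi> :: "'a::field_gcd poly fract" and p :: nat
  assumes alg_closed: "\<And>f :: 'a poly. degree f \<ge> 1 \<Longrightarrow> \<exists>x. poly f x = 0"
    and char: "CHAR('a) = p" and pos: "p > 0"
  shows "(\<nexists>x. finite_critical_point \<phi> x) \<longleftrightarrow>
         (\<exists>n (qs :: 'a poly list) a. length qs = n + 1 \<and> a \<noteq> 0 \<and>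
            is_cf_expansion \<phi>
              (map (\<lambda>i. if i = n then pcompose (qs ! i) (monom 1 p) + [:0, a:]
                        else pcompose (qs ! i) (monom 1 p)) [0..<n + 1]))"
proof -
  let ?f = "rnum \<phi>" and ?g = "rden \<phi>"
  have cp: "CHAR('a) > 0" using char pos by simp
  have mkeq: "\<And>n qs a. map (\<lambda>i. if i = n then pcompose (qs ! i) (monom 1 p) + [:0, a:]
                        else pcompose (qs ! i) (monom 1 p)) [0..<n + 1] = mk CHAR('a) n qs a"
    by (simp add: mk_def char)
  have "(\<nexists>x. finite_critical_point \<phi> x) \<longleftrightarrow> (wr ?f ?g \<noteq> 0 \<and> degree (wr ?f ?g) = 0)"
    by (rule crit_iff[OF alg_closed])
  also have "\<dots> \<longleftrightarrow> (\<exists>n (qs :: 'a poly list) a. length qs = n + 1 \<and> a \<noteq> 0 \<and>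
            is_cf_expansion \<phi> (mk CHAR('a) n qs a))"
  proof
    assume good: "wr ?f ?g \<noteq> 0 \<and> degree (wr ?f ?g) = 0"
    obtain n qs a where b: "length qs = n + 1" "a \<noteq> 0" "cfrac (mk CHAR('a) n qs a) = Fract ?f ?g"
      "\<forall>i\<in>{1..<n+1}. degree (mk CHAR('a) n qs a ! i) \<ge> 1"
      using build[OF cp rden_nz] good by blast
    have len: "length (mk CHAR('a) n qs a) = n + 1" by (simp add: mk_def)
    have "is_cf_expansion \<phi> (mk CHAR('a) n qs a)"
      unfolding is_cf_expansion_def using b mk_ne len by (simp add: phi_Fract)
    thus "\<exists>n (qs :: 'a poly list) a. length qs = n + 1 \<and> a \<noteq> 0 \<and>
            is_cf_expansion \<phi> (mk CHAR('a) n qs a)" using b by blast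
  next
    assume "\<exists>n (qs :: 'a poly list) a. length qs = n + 1 \<and> a \<noteq> 0 \<and>
            is_cf_expansion \<phi> (mk CHAR('a) n qs a)"
    then obtain n qs a where r: "length qs = n + 1" "a \<noteq> 0" "is_cf_expansion \<phi> (mk CHAR('a) n qs a)"
      by blast
    obtain P Q where PQ: "Q \<noteq> 0" "cfrac (mk CHAR('a) n qs a) = Fract P Q" "wr P Q \<noteq> 0" "degree (wr P Q) = 0"
      using cf_wr[OF r(1,2)] by blast
    have "Fract ?f ?g = Fract P Q" using PQ(2) r(3) by (simp add: is_cf_expansion_def phi_Fract)
    thus "wr ?f ?g \<noteq> 0 \<and> degree (wr ?f ?g) = 0"
      using reduced_good[OF _ rden_nz PQ(1) coprime_rnum_rden PQ(3,4)] by blast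
  qed
  finally show ?thesis unfolding mkeq .
qed

end
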